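(* The asymptotic existential $L_{\mathrm{rings}}$-theory of $\{\mathbb{F}_p[t]/(t^n):n\in\mathbb{N}\}$ equals the existential $L_{\mathrm{rings}}$-theory of the ring $\mathbb{F}_p[t^{1/\infty}]/(t)$.
   Context: $\mathbb{F}_p[t^{1/\infty}]=\varinjlim_n\mathbb{F}_p[t^{1/n}]$ is the direct limit of the polynomial rings $\mathbb{F}_p[t^{1/n}]$, ordered by divisibility of $n$, along the natural inclusions $\mathbb{F}_p[t^{1/n}]\hookrightarrow\mathbb{F}_p[t^{1/m}]$ for $n\mid m$. The ring $\mathbb{F}_p[t^{1/\infty}]/(t)$ is its quotient by the ideal generated by $t$. The asymptotic existential theory of a class is the set of existential sentences true in all but finitely many members. *)

theory Defs
  imports "HOL-Algebra.Algebra" "HOL-Number_Theory.Residues"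
begin

datatype tm = TVar nat | TZero | TOne | TAdd tm tm | TNeg tm | TMul tm tm

datatype fm = FEq tm tm | FNot fm | FAnd fm fm | FOr fm fm
  | FEx nat fm | FAll nat fm

fun tvars :: "tm \<Rightarrow> nat set" where
  "tvars (TVar i) = {i}"
| "tvars TZero = {}"
| "tvars TOne = {}"
| "tvars (TAdd a b) = tvars a \<union> tvars b"
| "tvars (TNeg a) = tvars a"
| "tvars (TMul a b) = tvars a \<union> tvars b"

fun frees :: "fm \<Rightarrow> nat set" where
  "frees (FEq a b) = tvars a \<union> tvars b"
| "frees (FNot f) = frees f"
| "frees (FAnd f g) = frees f \<union> frees g"
| "frees (FOr f g) = frees f \<union> frees g"
| "frees (FEx x f) = frees f - {x}"
| "frees (FAll x f) = frees f - {x}"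

definition sentence :: "fm \<Rightarrow> bool" where
  "sentence f \<longleftrightarrow> frees f = {}"

fun qfree :: "fm \<Rightarrow> bool" where
  "qfree (FEq a b) = True"
| "qfree (FNot f) = qfree f"
| "qfree (FAnd f g) = (qfree f \<and> qfree g)"
| "qfree (FOr f g) = (qfree f \<and> qfree g)"
| "qfree (FEx x f) = False"
| "qfree (FAll x f) = False"

fun existential :: "fm \<Rightarrow> bool" where
  "existential (FEx x f) = existential f"
| "existential f = qfree f"

fun teval :: "('a, 'b) ring_scheme \<Rightarrow> (nat \<Rightarrow> 'a) \<Rightarrow> tm \<Rightarrow> 'a" where
  "teval R v (TVar i) = v i"
| "teval R v TZero = \<zero>\<^bsub>R\<^esub>"
| "teval R v TOne = \<one>\<^bsub>R\<^esub>"
| "teval R v (TAdd a b) = teval R v a \<oplus>\<^bsub>R\<^esub> teval R v b"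
| "teval R v (TNeg a) = \<ominus>\<^bsub>R\<^esub> teval R v a"
| "teval R v (TMul a b) = teval R v a \<otimes>\<^bsub>R\<^esub> teval R v b"

fun sat :: "('a, 'b) ring_scheme \<Rightarrow> (nat \<Rightarrow> 'a) \<Rightarrow> fm \<Rightarrow> bool" where
  "sat R v (FEq a b) = (teval R v a = teval R v b)"
| "sat R v (FNot f) = (\<not> sat R v f)"
| "sat R v (FAnd f g) = (sat R v f \<and> sat R v g)"
| "sat R v (FOr f g) = (sat R v f \<or> sat R v g)"
| "sat R v (FEx x f) = (\<exists>a\<in>carrier R. sat R (v(x := a)) f)"
| "sat R v (FAll x f) = (\<forall>a\<in>carrier R. sat R (v(x := a)) f)"

definition models :: "('a, 'b) ring_scheme \<Rightarrow> fm \<Rightarrow> bool" where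
  "models R f \<longleftrightarrow> (\<forall>v. range v \<subseteq> carrier R \<longrightarrow> sat R v f)"

definition exist_theory :: "('a, 'b) ring_scheme \<Rightarrow> fm set" where
  "exist_theory R = {f. sentence f \<and> existential f \<and> models R f}"

definition asymp_exist_theory :: "(nat \<Rightarrow> ('a, 'b) ring_scheme) \<Rightarrow> fm set" where
  "asymp_exist_theory A =
     {f. sentence f \<and> existential f \<and> finite {n. \<not> models (A n) f}}"

definition Fp_poly :: "nat \<Rightarrow> (int, nat \<Rightarrow> int) up_ring" where
  "Fp_poly p = UP (residue_ring (int p))"

definition Fp_trunc :: "nat \<Rightarrow> nat \<Rightarrow> (nat \<Rightarrow> int) set ring" where
  "Fp_trunc p n =
     Fp_poly p Quot (PIdl\<^bsub>Fp_poly p\<^esub> (monom (Fp_poly p) 1 n))"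

text \<open>F_p[t^{1/\<infinity>}] = direct limit of the F_p[t^{1/n}], realised as the
union of all F_p[t^{1/n}], i.e. the ring of finite sums of a_q t^q with
q \<in> Q, q \<ge> 0, a_q \<in> F_p (monoid algebra F_p[Q_{\<ge>0}]).  An element is
its coefficient function rat \<Rightarrow> F_p.\<close>
definition tinf_carrier :: "nat \<Rightarrow> (rat \<Rightarrow> int) set" where
  "tinf_carrier p = {f. finite {q. f q \<noteq> 0} \<and> (\<forall>q. f q \<noteq> 0 \<longrightarrow> q \<ge> 0)
                    \<and> (\<forall>q. f q \<in> {0..<int p})}"

definition tinf_mult :: "nat \<Rightarrow> (rat \<Rightarrow> int) \<Rightarrow> (rat \<Rightarrow> int) \<Rightarrow> (rat \<Rightarrow> int)" where
  "tinf_mult p f g = (\<lambda>q. (\<Sum>r\<in>{r. f r \<noteq> 0}. f r * g (q - r)) mod int p)"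

definition tinf_add :: "nat \<Rightarrow> (rat \<Rightarrow> int) \<Rightarrow> (rat \<Rightarrow> int) \<Rightarrow> (rat \<Rightarrow> int)" where
  "tinf_add p f g = (\<lambda>q. (f q + g q) mod int p)"

definition tinf_one :: "rat \<Rightarrow> int" where
  "tinf_one = (\<lambda>q. if q = 0 then 1 else 0)"

definition Fp_tinf :: "nat \<Rightarrow> (rat \<Rightarrow> int) ring" where
  "Fp_tinf p =
     \<lparr>carrier = tinf_carrier p,
      monoid.mult = tinf_mult p,
      one = tinf_one,
      ring.zero = (\<lambda>q. 0),
      ring.add = tinf_add p\<rparr>"

definition tvar_inf :: "rat \<Rightarrow> int" where
  "tvar_inf = (\<lambda>q. if q = 1 then 1 else 0)"

definition Fp_tinf_mod_t :: "nat \<Rightarrow> (rat \<Rightarrow> int) set ring" where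
  "Fp_tinf_mod_t p = Fp_tinf p Quot (PIdl\<^bsub>Fp_tinf p\<^esub> tvar_inf)"

end

theory Submission
  imports Defs
begin


fun satS :: "('a,'b) ring_scheme \<Rightarrow> 'a set \<Rightarrow> (nat \<Rightarrow> 'a) \<Rightarrow> fm \<Rightarrow> bool" where
  "satS R S v (FEx x f) = (\<exists>a\<in>S. satS R S (v(x:=a)) f)"
| "satS R S v f = sat R v f"

lemma sat_satS: "existential f \<Longrightarrow> sat R v f = satS R (carrier R) v f"
  by (induction f arbitrary: v) auto

lemma satS_mono: "S \<subseteq> S' \<Longrightarrow> satS R S v f \<Longrightarrow> satS R S' v f"
  by (induction f arbitrary: v) auto

lemma teval_agree: "(\<forall>i\<in>tvars t. v i = w i) \<Longrightarrow> teval R v t = teval R w t"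
  by (induction t) auto

lemma sat_agree: "(\<forall>i\<in>frees f. v i = w i) \<Longrightarrow> sat R v f = sat R w f"
proof (induction f arbitrary: v w)
  case (FEq a b) then show ?case using teval_agree[of a v w R] teval_agree[of b v w R] by auto
next
  case (FEx x f)
  have "\<And>a. sat R (v(x:=a)) f = sat R (w(x:=a)) f" using FEx by (intro FEx.IH) auto
  then show ?case by simp
next
  case (FAll x f)
  have "\<And>a. sat R (v(x:=a)) f = sat R (w(x:=a)) f" using FAll by (intro FAll.IH) auto
  then show ?case by simp
next
  case (FAnd f g)
  have "sat R v f = sat R w f" "sat R v g = sat R w g" using FAnd by (intro FAnd.IH; auto)+
  then show ?case by simp
next
  case (FOr f g)
  have "sat R v f = sat R w f" "sat R v g = sat R w g" using FOr by (intro FOr.IH; auto)+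
  then show ?case by simp
qed auto

lemma models_iff_sat:
  assumes "sentence f" "ring R"
  shows "models R f \<longleftrightarrow> sat R (\<lambda>_. \<zero>\<^bsub>R\<^esub>) f"
proof -
  have "sat R v f = sat R (\<lambda>_. \<zero>\<^bsub>R\<^esub>) f" for v
    using assms(1) by (intro sat_agree) (auto simp: sentence_def)
  moreover have "range (\<lambda>_. \<zero>\<^bsub>R\<^esub>) \<subseteq> carrier R" using ring.ring_simprules(2)[OF assms(2)] by auto
  ultimately show ?thesis unfolding models_def by blast
qed

lemma teval_hom:
  assumes "ring_hom_ring C A g" "range u \<subseteq> carrier C"
  shows "teval C u t \<in> carrier C \<and> teval A (\<lambda>i. g (u i)) t = g (teval C u t)"
proof -
  interpret ring_hom_ring C A g by fact
  show ?thesis using assms(2) by (induction t) auto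
qed

lemma qfree_transfer:
  assumes g: "ring_hom_ring C A g" and h: "ring_hom_ring C B h"
    and ker: "\<forall>x\<in>carrier C. (g x = \<zero>\<^bsub>A\<^esub>) = (h x = \<zero>\<^bsub>B\<^esub>)"
    and u: "range u \<subseteq> carrier C"
  shows "qfree f \<Longrightarrow> sat A (\<lambda>i. g (u i)) f = sat B (\<lambda>i. h (u i)) f"
proof (induction f)
  case (FEq a b)
  interpret G: ring_hom_ring C A g by fact
  interpret H: ring_hom_ring C B h by fact
  define x where "x = teval C u a" define y where "y = teval C u b"
  have xc: "x \<in> carrier C" "y \<in> carrier C" using teval_hom[OF g u] x_def y_def by auto
  have "g (x \<ominus>\<^bsub>C\<^esub> y) = g x \<ominus>\<^bsub>A\<^esub> g y"
    using xc by (simp add: G.R.minus_eq G.S.minus_eq)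
  then have e1: "g x = g y \<longleftrightarrow> g (x \<ominus>\<^bsub>C\<^esub> y) = \<zero>\<^bsub>A\<^esub>"
    using xc G.S.r_right_minus_eq by simp
  have e2: "g (x \<ominus>\<^bsub>C\<^esub> y) = \<zero>\<^bsub>A\<^esub> \<longleftrightarrow> h (x \<ominus>\<^bsub>C\<^esub> y) = \<zero>\<^bsub>B\<^esub>" using ker xc by simp
  have "h (x \<ominus>\<^bsub>C\<^esub> y) = h x \<ominus>\<^bsub>B\<^esub> h y"
    using xc by (simp add: G.R.minus_eq H.S.minus_eq)
  then have e3: "h (x \<ominus>\<^bsub>C\<^esub> y) = \<zero>\<^bsub>B\<^esub> \<longleftrightarrow> h x = h y"
    using xc H.S.r_right_minus_eq by simp
  have "g x = g y \<longleftrightarrow> h x = h y" using e1 e2 e3 by simp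
  then show ?case using teval_hom[OF g u] teval_hom[OF h u] x_def y_def by simp
qed auto

lemma exist_transfer:
  assumes g: "ring_hom_ring C A g" and h: "ring_hom_ring C B h"
    and ker: "\<forall>x\<in>carrier C. (g x = \<zero>\<^bsub>A\<^esub>) = (h x = \<zero>\<^bsub>B\<^esub>)"
    and lift: "\<forall>a\<in>SA. \<exists>c\<in>carrier C. g c = a \<and> h c \<in> SB"
  shows "existential f \<Longrightarrow> range u \<subseteq> carrier C \<Longrightarrow> satS A SA (\<lambda>i. g (u i)) f \<Longrightarrow> satS B SB (\<lambda>i. h (u i)) f"
proof (induction f arbitrary: u)
  case (FEx x f)
  from FEx.prems(3) obtain a where a: "a \<in> SA" "satS A SA ((\<lambda>i. g (u i))(x := a)) f"
    by (simp only: satS.simps) blast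
  then obtain c where c: "c \<in> carrier C" "g c = a" "h c \<in> SB" using lift by blast
  have "(\<lambda>i. g (u i))(x := a) = (\<lambda>i. g ((u(x:=c)) i))" "(\<lambda>i. h (u i))(x := h c) = (\<lambda>i. h ((u(x:=c)) i))"
    using c by auto
  moreover have rng: "range (u(x:=c)) \<subseteq> carrier C" using FEx.prems c by auto
  ultimately have "satS B SB ((\<lambda>i. h ((u(x:=c)) i))) f"
    using FEx.IH[OF _ rng] FEx.prems(1) a(2) by (simp add: comp_def fun_upd_def)
  then show ?case using c \<open>(\<lambda>i. h (u i))(x := h c) = (\<lambda>i. h ((u(x:=c)) i))\<close> by (auto intro!: bexI[of _ "h c"])
qed (simp_all add: qfree_transfer[OF g h ker] del: sat.simps)

lemma exist_directed:
  assumes cov: "\<forall>a\<in>carrier A. \<exists>M>0. a \<in> S M"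
    and dir: "\<And>M N. 0 < M \<Longrightarrow> 0 < N \<Longrightarrow> S M \<subseteq> S (M * N)"
  shows "existential f \<Longrightarrow> sat A v f \<Longrightarrow> \<exists>M>(0::nat). satS A (S M) v f"
proof (induction f arbitrary: v)
  case (FEx x f)
  then obtain a where a: "a \<in> carrier A" "sat A (v(x:=a)) f" by auto
  then obtain M where M: "M > 0" "satS A (S M) (v(x:=a)) f" using FEx by auto
  obtain N where N: "N > 0" "a \<in> S N" using cov a by auto
  have "satS A (S (M*N)) (v(x:=a)) f" using satS_mono[OF dir[OF M(1) N(1)] M(2)] .
  moreover have "a \<in> S (M*N)" using dir[OF N(1) M(1)] N by (auto simp: mult.commute)
  ultimately show ?case using M N by (auto intro!: exI[of _ "M*N"])
qed auto


definition Emap :: "rat \<Rightarrow> (nat \<Rightarrow> int) \<Rightarrow> rat \<Rightarrow> int" where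
  "Emap a f = (\<lambda>q. if (\<exists>j::nat. q = of_nat j * a) then f (THE j::nat. q = of_nat j * a) else 0)"

lemma Emap_at: "0 < a \<Longrightarrow> Emap a f (of_nat j * a) = f j"
  unfolding Emap_def by (auto intro!: arg_cong[where f=f] the_equality)

lemma Emap_off: "\<not>(\<exists>j::nat. q = of_nat j * a) \<Longrightarrow> Emap a f q = 0"
  unfolding Emap_def by auto

abbreviation "Zr p \<equiv> residue_ring (int p)"

lemma Zr_simps:
  "carrier (Zr p) = {0..int p - 1}" "x \<otimes>\<^bsub>Zr p\<^esub> y = (x * y) mod int p"
  "x \<oplus>\<^bsub>Zr p\<^esub> y = (x + y) mod int p" "\<zero>\<^bsub>Zr p\<^esub> = 0" "\<one>\<^bsub>Zr p\<^esub> = 1"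
  by (simp_all add: residue_ring_def)

lemma UP_simps:
  assumes "f \<in> up (Zr p)" "g \<in> up (Zr p)" "1 < p"
  shows "(f \<otimes>\<^bsub>UP (Zr p)\<^esub> g) n = (\<Sum>i\<le>n. f i * g (n-i)) mod int p"
    "(f \<oplus>\<^bsub>UP (Zr p)\<^esub> g) n = (f n + g n) mod int p"
proof -
  interpret residues "int p" "Zr p" using assms(3) by unfold_locales auto
  have "(f \<otimes>\<^bsub>UP (Zr p)\<^esub> g) n = (\<Oplus>\<^bsub>Zr p\<^esub>i\<in>{..n}. f i \<otimes>\<^bsub>Zr p\<^esub> g (n-i))"
    using assms by (simp add: UP_def)
  also have "\<dots> = (\<Oplus>\<^bsub>Zr p\<^esub>i\<in>{..n}. (f i * g (n-i)) mod int p)"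
    by (simp add: Zr_simps)
  also have "\<dots> = (\<Sum>i\<le>n. f i * g (n-i)) mod int p"
    by (simp add: sum_cong)
  finally show "(f \<otimes>\<^bsub>UP (Zr p)\<^esub> g) n = (\<Sum>i\<le>n. f i * g (n-i)) mod int p" .
  show "(f \<oplus>\<^bsub>UP (Zr p)\<^esub> g) n = (f n + g n) mod int p"
    using assms by (simp add: UP_def Zr_simps)
qed

lemma UP_one_zero: "\<one>\<^bsub>UP (Zr p)\<^esub> = (\<lambda>i. if i = 0 then 1 else 0)" "\<zero>\<^bsub>UP (Zr p)\<^esub> = (\<lambda>i. 0)"
  by (simp_all add: UP_def residue_ring_def fun_eq_iff)

lemma up_bound:
  assumes "f \<in> up (Zr p)" obtains n where "\<And>i. n < i \<Longrightarrow> f i = 0"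
  using assms unfolding up_def bound_def by (auto simp: Zr_simps)

lemma up_vals: "f \<in> up (Zr p) \<Longrightarrow> f i \<in> {0..int p - 1}"
  unfolding up_def by (auto simp: Zr_simps)

lemma Emap_supp:
  assumes "0 < a" shows "{q. Emap a f q \<noteq> 0} = (\<lambda>j. of_nat j * a) ` {j. f j \<noteq> 0}"
proof
  show "{q. Emap a f q \<noteq> 0} \<subseteq> (\<lambda>j. of_nat j * a) ` {j. f j \<noteq> 0}"
  proof
    fix q assume "q \<in> {q. Emap a f q \<noteq> 0}"
    then have ne: "Emap a f q \<noteq> 0" by simp
    then obtain j::nat where "q = of_nat j * a" using Emap_off by blast
    then show "q \<in> (\<lambda>j. of_nat j * a) ` {j. f j \<noteq> 0}" using ne Emap_at[OF assms] by auto
  qed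
qed (use Emap_at[OF assms] in auto)

lemma Emap_carrier:
  assumes "0 < a" "f \<in> up (Zr p)"
  shows "Emap a f \<in> tinf_carrier p"
proof -
  obtain n where n: "\<And>i. n < i \<Longrightarrow> f i = 0" using up_bound[OF assms(2)] by blast
  have "{j. f j \<noteq> 0} \<subseteq> {..n}" using n by (auto simp: not_less[symmetric])
  then have "finite {j. f j \<noteq> 0}" using finite_subset by blast
  then have fin: "finite {q. Emap a f q \<noteq> 0}" using Emap_supp[OF assms(1)] by simp
  have nn: "\<forall>q. Emap a f q \<noteq> 0 \<longrightarrow> q \<ge> 0"
    using Emap_off[of q a f for q] assms(1) by (metis of_nat_0_le_iff zero_le_mult_iff less_imp_le)
  have "\<forall>q. Emap a f q \<in> {0..<int p}"
  proof
    fix q show "Emap a f q \<in> {0..<int p}"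
      using up_vals[OF assms(2)] unfolding Emap_def by (cases "p = 0") (auto simp: Emap_def)
  qed
  then show ?thesis using fin nn unfolding tinf_carrier_def by auto
qed


lemma Emap_mult:
  assumes a: "0 < a" and p: "1 < p" and f: "f \<in> up (Zr p)" and g: "g \<in> up (Zr p)"
  shows "Emap a (f \<otimes>\<^bsub>UP (Zr p)\<^esub> g) = tinf_mult p (Emap a f) (Emap a g)"
proof
  fix q
  define D where "D = {j. f j \<noteq> 0}"
  obtain N where N: "\<And>i. N < i \<Longrightarrow> f i = 0" using up_bound[OF f] by blast
  have "D \<subseteq> {..N}" using N unfolding D_def by (auto simp: not_less[symmetric])
  then have finD: "finite D" using finite_subset by blast
  have inj: "inj_on (\<lambda>j::nat. of_nat j * a) D" using a by (auto simp: inj_on_def)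
  have T: "tinf_mult p (Emap a f) (Emap a g) q = (\<Sum>j\<in>D. f j * Emap a g (q - of_nat j * a)) mod int p"
    unfolding tinf_mult_def Emap_supp[OF a] D_def[symmetric]
    by (simp add: sum.reindex[OF inj] Emap_at[OF a])
  show "Emap a (f \<otimes>\<^bsub>UP (Zr p)\<^esub> g) q = tinf_mult p (Emap a f) (Emap a g) q"
  proof (cases "\<exists>n::nat. q = of_nat n * a")
    case True
    then obtain n::nat where q: "q = of_nat n * a" by blast
    define h where "h j = (if j \<le> n then f j * g (n-j) else 0)" for j
    have tm: "f j * Emap a g (q - of_nat j * a) = h j" for j
    proof (cases "j \<le> n")
      case True
      then have "q - of_nat j * a = of_nat (n - j) * a" using q by (simp add: of_nat_diff algebra_simps)
      then show ?thesis using True Emap_at[OF a] h_def by (simp del: of_nat_diff)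
    next
      case False
      have "q - of_nat j * a < 0" using False q a by (simp add: algebra_simps)
      then have "\<not>(\<exists>i::nat. q - of_nat j * a = of_nat i * a)" using a
        by (metis not_less of_nat_0_le_iff zero_le_mult_iff less_imp_le)
      then show ?thesis using Emap_off False h_def by simp
    qed
    have "(\<Sum>j\<in>D. h j) = (\<Sum>j\<in>D \<union> {..n}. h j)"
      using finD by (intro sum.mono_neutral_left) (auto simp: D_def h_def)
    also have "\<dots> = (\<Sum>j\<in>{..n}. h j)"
      using finD by (intro sum.mono_neutral_right) (auto simp: h_def)
    also have "\<dots> = (\<Sum>j\<le>n. f j * g (n-j))" by (simp add: h_def)
    finally have S: "(\<Sum>j\<in>D. h j) = (\<Sum>j\<le>n. f j * g (n-j))" .
    have "Emap a (f \<otimes>\<^bsub>UP (Zr p)\<^esub> g) q = (\<Sum>j\<le>n. f j * g (n-j)) mod int p"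
      using q Emap_at[OF a] UP_simps(1)[OF f g p] by simp
    then show ?thesis using T S tm by simp
  next
    case False
    have z: "f j * Emap a g (q - of_nat j * a) = 0" for j
    proof -
      have "\<not>(\<exists>i::nat. q - of_nat j * a = of_nat i * a)"
      proof
        assume "\<exists>i::nat. q - of_nat j * a = of_nat i * a"
        then obtain i::nat where "q - of_nat j * a = of_nat i * a" by blast
        then have "q = of_nat (i + j) * a" by (simp add: algebra_simps)
        then show False using False by blast
      qed
      then show ?thesis using Emap_off by simp
    qed
    have "(\<Sum>j\<in>D. f j * Emap a g (q - of_nat j * a)) = 0" by (simp only: z sum.neutral_const)
    then show ?thesis using T False Emap_off by simp
  qed
qed

lemma Emap_add:
  assumes a: "0 < a" and p: "1 < p" and f: "f \<in> up (Zr p)" and g: "g \<in> up (Zr p)"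
  shows "Emap a (f \<oplus>\<^bsub>UP (Zr p)\<^esub> g) = tinf_add p (Emap a f) (Emap a g)"
proof
  fix q show "Emap a (f \<oplus>\<^bsub>UP (Zr p)\<^esub> g) q = tinf_add p (Emap a f) (Emap a g) q"
  proof (cases "\<exists>n::nat. q = of_nat n * a")
    case True
    then obtain n::nat where q: "q = of_nat n * a" by blast
    then show ?thesis using Emap_at[OF a] UP_simps(2)[OF f g p] by (simp add: tinf_add_def)
  qed (simp add: Emap_off tinf_add_def)
qed

lemma Emap_one:
  assumes a: "0 < a" shows "Emap a \<one>\<^bsub>UP (Zr p)\<^esub> = tinf_one"
proof
  fix q show "Emap a \<one>\<^bsub>UP (Zr p)\<^esub> q = tinf_one q"
  proof (cases "\<exists>n::nat. q = of_nat n * a")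
    case True
    then obtain n::nat where q: "q = of_nat n * a" by blast
    then show ?thesis using Emap_at[OF a] a by (simp add: tinf_one_def UP_one_zero)
  next
    case False
    then have "q \<noteq> 0" by (metis mult_zero_left of_nat_0)
    then show ?thesis using False by (simp add: Emap_off tinf_one_def)
  qed
qed

lemma Emap_zero: "Emap a \<zero>\<^bsub>UP (Zr p)\<^esub> = (\<lambda>q. 0)"
  by (simp add: Emap_def UP_one_zero)

lemma Emap_hom:
  assumes a: "0 < a" and p: "1 < p"
  shows "Emap a \<in> ring_hom (UP (Zr p)) (Fp_tinf p)"
proof -
  have cUP: "carrier (UP (Zr p)) = up (Zr p)" by (simp add: UP_def)
  show ?thesis
    by (rule ring_hom_memI)
      (auto simp: cUP Fp_tinf_def Emap_carrier[OF a] Emap_mult[OF a p] Emap_add[OF a p] Emap_one[OF a])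
qed


definition spread :: "nat \<Rightarrow> (nat \<Rightarrow> int) \<Rightarrow> nat \<Rightarrow> int" where
  "spread N c = (\<lambda>i. if N dvd i then c (i div N) else 0)"

lemma Emap_spread:
  assumes a: "0 < a" and N: "0 < N"
  shows "Emap (of_nat N * a) c = Emap a (spread N c)"
proof
  fix q
  have Na: "0 < of_nat N * a" using a N by simp
  show "Emap (of_nat N * a) c q = Emap a (spread N c) q"
  proof (cases "\<exists>j::nat. q = of_nat j * (of_nat N * a)")
    case True
    then obtain j::nat where q: "q = of_nat j * (of_nat N * a)" by blast
    then have q2: "q = of_nat (j * N) * a" by (simp add: algebra_simps)
    have l: "Emap (of_nat N * a) c q = c j" using q Emap_at[OF Na] by simp
    have "Emap a (spread N c) q = spread N c (j * N)" by (simp only: q2 Emap_at[OF a])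
    also have "\<dots> = c j" using N by (simp add: spread_def)
    finally show ?thesis using l by simp
  next
    case False
    have "Emap a (spread N c) q = 0"
    proof (cases "\<exists>i::nat. q = of_nat i * a")
      case True
      then obtain i::nat where q: "q = of_nat i * a" by blast
      have "\<not> N dvd i"
      proof
        assume "N dvd i" then obtain j where "i = N * j" by auto
        then have "q = of_nat j * (of_nat N * a)" using q by (simp add: algebra_simps)
        then show False using False by blast
      qed
      then show ?thesis using q Emap_at[OF a] by (simp add: spread_def)
    qed (simp add: Emap_off)
    then show ?thesis using False Emap_off by simp
  qed
qed

lemma spread_up:
  assumes "c \<in> up (Zr p)" "0 < N" "1 < p"
  shows "spread N c \<in> up (Zr p)"
proof
  fix n show "spread N c n \<in> carrier (Zr p)"
    using up_vals[OF assms(1)] assms(3) by (auto simp: spread_def Zr_simps)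
next
  obtain n where n: "\<And>i. n < i \<Longrightarrow> c i = 0" using up_bound[OF assms(1)] by blast
  have "bound \<zero>\<^bsub>Zr p\<^esub> (N * n + N) (spread N c)"
  proof
    fix i assume i: "N * n + N < i"
    show "spread N c i = \<zero>\<^bsub>Zr p\<^esub>"
    proof (cases "N dvd i")
      case True
      then obtain j where j: "i = N * j" by auto
      have "n < j"
      proof (rule ccontr)
        assume "\<not> n < j" then have "N * j \<le> N * n" by simp
        then show False using i j by linarith
      qed
      then show ?thesis using n j assms(2) by (simp add: spread_def Zr_simps)
    qed (simp add: spread_def Zr_simps)
  qed
  then show "\<exists>n. bound \<zero>\<^bsub>Zr p\<^esub> n (spread N c)" by blast
qed

lemma refine:
  assumes "f \<in> up (Zr p)" "0 < M" "0 < N" "1 < p"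
  shows "\<exists>f'\<in>up (Zr p). Emap (1 / of_nat M) f = Emap (1 / of_nat (M * N)) f'"
proof -
  have "1 / (of_nat M :: rat) = of_nat N * (1 / of_nat (M * N))" using assms by (simp add: field_simps)
  then have "Emap (1 / of_nat M) f = Emap (1 / of_nat (M * N)) (spread N f)"
    using Emap_spread[of "1 / of_nat (M * N)" N f] assms by simp
  then show ?thesis using spread_up[OF assms(1,3,4)] by blast
qed

lemma rat_grid:
  assumes "q \<in> S" "finite S" "\<forall>q\<in>S. 0 \<le> q"
  shows "\<exists>k::nat. q = of_nat k * (1 / of_nat (\<Prod>r\<in>S. nat (snd (quotient_of r))))"
proof -
  define M where "M = (\<Prod>r\<in>S. nat (snd (quotient_of r)))"
  obtain n d where nd: "quotient_of q = (n, d)" by (cases "quotient_of q")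
  have d: "d > 0" using quotient_of_denom_pos[OF nd] .
  have qe: "q = of_int n / of_int d" using quotient_of_div[OF nd] .
  have "nat d dvd M" unfolding M_def using assms(1,2) nd by (metis dvd_prodI snd_conv)
  then obtain e where e: "M = nat d * e" by (auto elim: dvdE)
  have "q * of_nat M = of_int (n * int e)"
    using qe e d by (simp add: field_simps)
  moreover have "q * of_nat M \<ge> 0" using assms by simp
  ultimately have "n * int e \<ge> 0" by (metis of_int_0_le_iff)
  have Mpos: "M > 0" unfolding M_def using assms(2)
    by (auto intro!: prod_pos simp: quotient_of_denom_pos')
  have "q = of_nat (nat (n * int e)) * (1 / of_nat M)"
    using \<open>q * of_nat M = of_int (n * int e)\<close> \<open>n * int e \<ge> 0\<close> Mpos by (simp add: field_simps)
  then show ?thesis unfolding M_def by blast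
qed

lemma cover:
  assumes x: "x \<in> tinf_carrier p" and p: "1 < p"
  shows "\<exists>M>0. \<exists>f\<in>up (Zr p). x = Emap (1 / of_nat M) f"
proof -
  define S where "S = {q. x q \<noteq> 0}"
  have finS: "finite S" and nnS: "\<forall>q\<in>S. 0 \<le> q" and vals: "\<And>q. x q \<in> {0..<int p}"
    using x unfolding tinf_carrier_def S_def by auto
  define M where "M = (\<Prod>r\<in>S. nat (snd (quotient_of r)))"
  have Mpos: "M > 0" unfolding M_def using finS
    by (auto intro!: prod_pos simp: quotient_of_denom_pos')
  have a: "(0::rat) < 1 / of_nat M" using Mpos by simp
  define f where "f i = x (of_nat i * (1 / of_nat M))" for i
  have inj: "inj (\<lambda>i::nat. of_nat i * (1 / (of_nat M :: rat)))" using Mpos by (auto simp: inj_def)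
  have "{i. f i \<noteq> 0} = (\<lambda>i. of_nat i * (1 / of_nat M)) -` S" unfolding f_def S_def by auto
  then have "finite {i. f i \<noteq> 0}" using finite_vimageI[OF finS inj] by simp
  then obtain n where n0: "\<forall>i\<in>{i. f i \<noteq> 0}. i \<le> n"
    unfolding finite_nat_set_iff_bounded_le by blast
  have n: "\<And>i. n < i \<Longrightarrow> f i = 0" using n0 by force
  have fup: "f \<in> up (Zr p)"
  proof
    fix i show "f i \<in> carrier (Zr p)" using vals[of "of_nat i * (1 / of_nat M)"] by (simp add: f_def Zr_simps)
  next
    have "bound \<zero>\<^bsub>Zr p\<^esub> n f" using n by (simp add: bound_def Zr_simps)
    then show "\<exists>n. bound \<zero>\<^bsub>Zr p\<^esub> n f" by blast
  qed
  have "x = Emap (1 / of_nat M) f"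
  proof
    fix q show "x q = Emap (1 / of_nat M) f q"
    proof (cases "\<exists>j::nat. q = of_nat j * (1 / of_nat M)")
      case True
      then obtain j::nat where "q = of_nat j * (1 / of_nat M)" by blast
      then show ?thesis using Emap_at[OF a] f_def by simp
    next
      case False
      have "x q = 0"
      proof (rule ccontr)
        assume "x q \<noteq> 0"
        then have "q \<in> S" unfolding S_def by simp
        then show False using rat_grid[OF _ finS nnS] False unfolding M_def by blast
      qed
      then show ?thesis using False Emap_off by simp
    qed
  qed
  then show ?thesis using Mpos fup by blast
qed


lemma cover2:
  assumes "x \<in> tinf_carrier p" "y \<in> tinf_carrier p" "1 < p"
  shows "\<exists>M>0. \<exists>f\<in>up (Zr p). \<exists>g\<in>up (Zr p). x = Emap (1 / of_nat M) f \<and> y = Emap (1 / of_nat M) g"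
proof -
  obtain M f where M: "M > 0" "f \<in> up (Zr p)" "x = Emap (1 / of_nat M) f" using cover[OF assms(1,3)] by blast
  obtain N g where N: "N > 0" "g \<in> up (Zr p)" "y = Emap (1 / of_nat N) g" using cover[OF assms(2,3)] by blast
  obtain f' where f': "f' \<in> up (Zr p)" "x = Emap (1 / of_nat (M * N)) f'"
    using refine[OF M(2,1) N(1) assms(3)] M(3) by auto
  obtain g' where g': "g' \<in> up (Zr p)" "y = Emap (1 / of_nat (N * M)) g'"
    using refine[OF N(2,1) M(1) assms(3)] N(3) by auto
  show ?thesis using f' g' M N by (intro exI[of _ "M * N"]) (auto simp: mult.commute)
qed

lemma cover3:
  assumes "x \<in> tinf_carrier p" "y \<in> tinf_carrier p" "z \<in> tinf_carrier p" "1 < p"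
  shows "\<exists>M>0. \<exists>f\<in>up (Zr p). \<exists>g\<in>up (Zr p). \<exists>h\<in>up (Zr p).
     x = Emap (1 / of_nat M) f \<and> y = Emap (1 / of_nat M) g \<and> z = Emap (1 / of_nat M) h"
proof -
  obtain M f g where M: "M > 0" "f \<in> up (Zr p)" "g \<in> up (Zr p)" "x = Emap (1 / of_nat M) f" "y = Emap (1 / of_nat M) g"
    using cover2[OF assms(1,2,4)] by blast
  obtain N h where N: "N > 0" "h \<in> up (Zr p)" "z = Emap (1 / of_nat N) h" using cover[OF assms(3,4)] by blast
  obtain f' where f': "f' \<in> up (Zr p)" "x = Emap (1 / of_nat (M * N)) f'"
    using refine[OF M(2,1) N(1) assms(4)] M(4) by auto
  obtain g' where g': "g' \<in> up (Zr p)" "y = Emap (1 / of_nat (M * N)) g'"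
    using refine[OF M(3,1) N(1) assms(4)] M(5) by auto
  obtain h' where h': "h' \<in> up (Zr p)" "z = Emap (1 / of_nat (N * M)) h'"
    using refine[OF N(2,1) M(1) assms(4)] N(3) by auto
  show ?thesis using f' g' h' M N by (intro exI[of _ "M * N"]) (auto simp: mult.commute)
qed

lemma tinf_cring:
  assumes p: "1 < p" shows "cring (Fp_tinf p)"
proof -
  interpret Z: residues "int p" "Zr p" using p by unfold_locales auto
  interpret P: UP_cring "Zr p" "UP (Zr p)" by unfold_locales
  let ?T = "Fp_tinf p"
  let ?P = "UP (Zr p)"
  have cP: "carrier ?P = up (Zr p)" by (simp add: UP_def)
  have cT: "carrier ?T = tinf_carrier p" by (simp add: Fp_tinf_def)
  have hom: "Emap (1 / of_nat M) \<in> ring_hom ?P ?T" if "M > 0" for M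
    using Emap_hom[OF _ p] that by simp
  have zT: "\<zero>\<^bsub>?T\<^esub> = Emap (1 / of_nat M) \<zero>\<^bsub>?P\<^esub>" for M
    by (simp add: Emap_zero Fp_tinf_def)
  have oT: "\<one>\<^bsub>?T\<^esub> = Emap (1 / of_nat M) \<one>\<^bsub>?P\<^esub>" if "M > 0" for M
    using that by (simp add: Emap_one Fp_tinf_def)
  note hm = ring_hom_mult[OF hom, symmetric] ring_hom_add[OF hom, symmetric] ring_hom_closed[OF hom]
  have c3: "\<exists>M>0. \<exists>f\<in>carrier ?P. \<exists>g\<in>carrier ?P. \<exists>h\<in>carrier ?P.
     x = Emap (1 / of_nat M) f \<and> y = Emap (1 / of_nat M) g \<and> z = Emap (1 / of_nat M) h"
    if "x \<in> carrier ?T" "y \<in> carrier ?T" "z \<in> carrier ?T" for x y z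
    using cover3[of x p y z] that p cP cT by simp
  have ag: "abelian_group ?T"
  proof (rule abelian_groupI)
    fix x y assume "x \<in> carrier ?T" "y \<in> carrier ?T"
    then obtain M f g h where "M > 0" "f \<in> carrier ?P" "g \<in> carrier ?P" "x = Emap (1 / of_nat M) f" "y = Emap (1 / of_nat M) g"
      using c3[of x y y] by blast
    then show "x \<oplus>\<^bsub>?T\<^esub> y \<in> carrier ?T" by (simp add: hm)
  next
    show "\<zero>\<^bsub>?T\<^esub> \<in> carrier ?T" using zT[of 1] ring_hom_closed[OF hom[of 1]] by simp
  next
    fix x y z assume "x \<in> carrier ?T" "y \<in> carrier ?T" "z \<in> carrier ?T"
    then obtain M f g h where "M > 0" "f \<in> carrier ?P" "g \<in> carrier ?P" "h \<in> carrier ?P" "x = Emap (1 / of_nat M) f" "y = Emap (1 / of_nat M) g" "z = Emap (1 / of_nat M) h"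
      using c3[of x y z] by blast
    then show "x \<oplus>\<^bsub>?T\<^esub> y \<oplus>\<^bsub>?T\<^esub> z = x \<oplus>\<^bsub>?T\<^esub> (y \<oplus>\<^bsub>?T\<^esub> z)" by (simp add: hm P.a_assoc)
  next
    fix x y assume "x \<in> carrier ?T" "y \<in> carrier ?T"
    then obtain M f g h where "M > 0" "f \<in> carrier ?P" "g \<in> carrier ?P" "x = Emap (1 / of_nat M) f" "y = Emap (1 / of_nat M) g"
      using c3[of x y y] by blast
    then show "x \<oplus>\<^bsub>?T\<^esub> y = y \<oplus>\<^bsub>?T\<^esub> x" by (simp add: hm P.a_comm)
  next
    fix x assume "x \<in> carrier ?T"
    then obtain M f where "M > 0" "f \<in> carrier ?P" "x = Emap (1 / of_nat M) f"
      using c3[of x x x] by blast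
    then show "\<zero>\<^bsub>?T\<^esub> \<oplus>\<^bsub>?T\<^esub> x = x" by (simp add: hm zT[of M])
  next
    fix x assume "x \<in> carrier ?T"
    then obtain M f where M: "M > 0" "f \<in> carrier ?P" "x = Emap (1 / of_nat M) f"
      using c3[of x x x] by blast
    then have "Emap (1 / of_nat M) (\<ominus>\<^bsub>?P\<^esub> f) \<oplus>\<^bsub>?T\<^esub> x = \<zero>\<^bsub>?T\<^esub>" by (simp add: hm zT[of M] P.l_neg)
    moreover have "Emap (1 / of_nat M) (\<ominus>\<^bsub>?P\<^esub> f) \<in> carrier ?T" using M by (simp add: hm)
    ultimately show "\<exists>y\<in>carrier ?T. y \<oplus>\<^bsub>?T\<^esub> x = \<zero>\<^bsub>?T\<^esub>" by blast
  qed
  have cm: "comm_monoid ?T"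
  proof (rule comm_monoidI)
    fix x y assume "x \<in> carrier ?T" "y \<in> carrier ?T"
    then obtain M f g h where "M > 0" "f \<in> carrier ?P" "g \<in> carrier ?P" "x = Emap (1 / of_nat M) f" "y = Emap (1 / of_nat M) g"
      using c3[of x y y] by blast
    then show "x \<otimes>\<^bsub>?T\<^esub> y \<in> carrier ?T" by (simp add: hm)
  next
    show "\<one>\<^bsub>?T\<^esub> \<in> carrier ?T" using oT[of 1] ring_hom_closed[OF hom[of 1]] by simp
  next
    fix x y z assume "x \<in> carrier ?T" "y \<in> carrier ?T" "z \<in> carrier ?T"
    then obtain M f g h where "M > 0" "f \<in> carrier ?P" "g \<in> carrier ?P" "h \<in> carrier ?P" "x = Emap (1 / of_nat M) f" "y = Emap (1 / of_nat M) g" "z = Emap (1 / of_nat M) h"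
      using c3[of x y z] by blast
    then show "x \<otimes>\<^bsub>?T\<^esub> y \<otimes>\<^bsub>?T\<^esub> z = x \<otimes>\<^bsub>?T\<^esub> (y \<otimes>\<^bsub>?T\<^esub> z)" by (simp add: hm P.m_assoc)
  next
    fix x assume "x \<in> carrier ?T"
    then obtain M f where "M > 0" "f \<in> carrier ?P" "x = Emap (1 / of_nat M) f"
      using c3[of x x x] by blast
    then show "\<one>\<^bsub>?T\<^esub> \<otimes>\<^bsub>?T\<^esub> x = x" by (simp add: hm oT[of M])
  next
    fix x y assume "x \<in> carrier ?T" "y \<in> carrier ?T"
    then obtain M f g h where "M > 0" "f \<in> carrier ?P" "g \<in> carrier ?P" "x = Emap (1 / of_nat M) f" "y = Emap (1 / of_nat M) g"
      using c3[of x y y] by blast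
    then show "x \<otimes>\<^bsub>?T\<^esub> y = y \<otimes>\<^bsub>?T\<^esub> x" by (simp add: hm P.m_comm)
  qed
  show ?thesis
  proof (rule cringI[OF ag cm])
    fix x y z assume "x \<in> carrier ?T" "y \<in> carrier ?T" "z \<in> carrier ?T"
    then obtain M f g h where "M > 0" "f \<in> carrier ?P" "g \<in> carrier ?P" "h \<in> carrier ?P" "x = Emap (1 / of_nat M) f" "y = Emap (1 / of_nat M) g" "z = Emap (1 / of_nat M) h"
      using c3[of x y z] by blast
    then show "(x \<oplus>\<^bsub>?T\<^esub> y) \<otimes>\<^bsub>?T\<^esub> z = x \<otimes>\<^bsub>?T\<^esub> z \<oplus>\<^bsub>?T\<^esub> y \<otimes>\<^bsub>?T\<^esub> z" by (simp add: hm P.l_distr)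
  qed
qed


lemma quot_carrier: "carrier (R Quot I) = (\<lambda>a. I +>\<^bsub>R\<^esub> a) ` carrier R"
  by (auto simp: FactRing_def A_RCOSETS_def')

lemma quot_zero: "\<zero>\<^bsub>R Quot I\<^esub> = I"
  by (simp add: FactRing_def)

lemma quot_eq_zero:
  assumes "ideal I R" "x \<in> carrier R"
  shows "(I +>\<^bsub>R\<^esub> x = I) \<longleftrightarrow> x \<in> I"
proof -
  interpret ideal I R by fact
  show ?thesis using a_rcos_self[OF assms(2)] a_rcos_const by auto
qed

section \<open>The ideal (t) in F_p[t^{1/oo}]\<close>

lemma tvar_carrier: "1 < p \<Longrightarrow> tvar_inf \<in> tinf_carrier p"
proof -
  assume p: "1 < p"
  have "{q. tvar_inf q \<noteq> 0} = {1}" by (auto simp: tvar_inf_def)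
  then show ?thesis using p by (auto simp: tinf_carrier_def tvar_inf_def)
qed

lemma mult_tvar:
  assumes x: "x \<in> tinf_carrier p"
  shows "tinf_mult p x tvar_inf = (\<lambda>q. x (q - 1))"
proof
  fix q
  have fin: "finite {r. x r \<noteq> 0}" and vals: "\<And>q. x q \<in> {0..<int p}" using x by (auto simp: tinf_carrier_def)
  have "(\<Sum>r\<in>{r. x r \<noteq> 0}. x r * tvar_inf (q - r)) = (\<Sum>r\<in>{r. x r \<noteq> 0}. if r = q - 1 then x r else 0)"
    by (rule sum.cong) (auto simp: tvar_inf_def)
  also have "\<dots> = x (q - 1)" using fin by (simp add: sum.delta')
  finally show "tinf_mult p x tvar_inf q = x (q - 1)"
    using vals[of "q - 1"] by (simp add: tinf_mult_def)
qed

lemma It_char: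
  assumes p: "1 < p"
  shows "PIdl\<^bsub>Fp_tinf p\<^esub> tvar_inf = {y \<in> tinf_carrier p. \<forall>q<1. y q = 0}"
proof
  show "PIdl\<^bsub>Fp_tinf p\<^esub> tvar_inf \<subseteq> {y \<in> tinf_carrier p. \<forall>q<1. y q = 0}"
  proof
    fix y assume "y \<in> PIdl\<^bsub>Fp_tinf p\<^esub> tvar_inf"
    then obtain x where x: "x \<in> tinf_carrier p" "y = tinf_mult p x tvar_inf"
      by (auto simp: cgenideal_def Fp_tinf_def)
    have yc: "y \<in> tinf_carrier p"
      using cring.cgenideal_ideal[OF tinf_cring[OF p]] tvar_carrier[OF p]
        \<open>y \<in> PIdl\<^bsub>Fp_tinf p\<^esub> tvar_inf\<close> ideal.Icarr by (fastforce simp: Fp_tinf_def)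
    have "\<forall>q<1. y q = 0"
    proof (intro allI impI)
      fix q :: rat assume "q < 1"
      then have "\<not> (q - 1 \<ge> 0)" by simp
      then have "x (q - 1) = 0" using x(1) unfolding tinf_carrier_def by blast
      then show "y q = 0" using x mult_tvar by simp
    qed
    then show "y \<in> {y \<in> tinf_carrier p. \<forall>q<1. y q = 0}" using yc by simp
  qed
next
  show "{y \<in> tinf_carrier p. \<forall>q<1. y q = 0} \<subseteq> PIdl\<^bsub>Fp_tinf p\<^esub> tvar_inf"
  proof
    fix y assume y: "y \<in> {y \<in> tinf_carrier p. \<forall>q<1. y q = 0}"
    define x where "x q = y (q + 1)" for q
    have fin: "finite {q. y q \<noteq> 0}" using y by (simp add: tinf_carrier_def)
    have "{q. x q \<noteq> 0} = (\<lambda>q. q - 1) ` {q. y q \<noteq> 0}"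
      unfolding x_def by (auto simp: image_iff) (metis add_diff_cancel_right')
    then have "finite {q. x q \<noteq> 0}" using fin by simp
    moreover have "\<forall>q. x q \<noteq> 0 \<longrightarrow> q \<ge> 0"
    proof (intro allI impI)
      fix q assume "x q \<noteq> 0"
      then have "\<not> (q + 1 < 1)" using y unfolding x_def by auto
      then show "q \<ge> 0" by simp
    qed
    moreover have "\<forall>q. x q \<in> {0..<int p}" using y unfolding x_def tinf_carrier_def by auto
    ultimately have xc: "x \<in> tinf_carrier p" unfolding tinf_carrier_def by auto
    have "tinf_mult p x tvar_inf = y" using mult_tvar[OF xc] unfolding x_def by simp
    then show "y \<in> PIdl\<^bsub>Fp_tinf p\<^esub> tvar_inf" using xc
      by (auto simp: cgenideal_def Fp_tinf_def)
  qed
qed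


abbreviation "PP p \<equiv> UP (Zr p)"

lemma PP_cring: "1 < p \<Longrightarrow> UP_cring (Zr p)"
proof -
  assume p: "1 < p"
  interpret Z: residues "int p" "Zr p" using p by unfold_locales auto
  show ?thesis by unfold_locales
qed

lemma cPP: "carrier (PP p) = up (Zr p)" by (simp add: UP_def)

lemma monom_eq: "1 < p \<Longrightarrow> monom (PP p) 1 n = (\<lambda>i. if i = n then 1 else 0)"
  by (simp add: UP_def Zr_simps fun_eq_iff)

lemma mult_monom:
  assumes p: "1 < p" and g: "g \<in> up (Zr p)"
  shows "g \<otimes>\<^bsub>PP p\<^esub> monom (PP p) 1 n = (\<lambda>k. if n \<le> k then g (k - n) else 0)"
proof
  fix k
  interpret P: UP_cring "Zr p" "PP p" by (rule PP_cring[OF p])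
  have mc: "monom (PP p) 1 n \<in> up (Zr p)" using P.monom_closed[of 1 n] p by (simp add: cPP Zr_simps)
  have "(\<Sum>i\<le>k. g i * monom (PP p) 1 n (k - i)) = (\<Sum>i\<le>k. if i = k - n then (if n \<le> k then g i else 0) else 0)"
    by (rule sum.cong) (auto simp: monom_eq[OF p])
  also have "\<dots> = (if n \<le> k then g (k - n) else 0)" by (simp add: sum.delta')
  finally show "(g \<otimes>\<^bsub>PP p\<^esub> monom (PP p) 1 n) k = (if n \<le> k then g (k - n) else 0)"
    using UP_simps(1)[OF g mc p] up_vals[OF g, of "k - n"] by simp
qed

definition In :: "nat \<Rightarrow> nat \<Rightarrow> (nat \<Rightarrow> int) set" where
  "In p n = PIdl\<^bsub>PP p\<^esub> (monom (PP p) 1 n)"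

lemma In_char:
  assumes p: "1 < p"
  shows "In p n = {f \<in> up (Zr p). \<forall>j<n. f j = 0}"
proof -
  interpret P: UP_cring "Zr p" "PP p" by (rule PP_cring[OF p])
  have mc: "monom (PP p) 1 n \<in> carrier (PP p)" using P.monom_closed[of 1 n] p by (simp add: Zr_simps)
  show ?thesis
  proof
    show "In p n \<subseteq> {f \<in> up (Zr p). \<forall>j<n. f j = 0}"
    proof
      fix f assume "f \<in> In p n"
      then obtain g where g: "g \<in> up (Zr p)" "f = g \<otimes>\<^bsub>PP p\<^esub> monom (PP p) 1 n"
        by (auto simp: In_def cgenideal_def cPP)
      have "f \<in> up (Zr p)" using g mc P.m_closed by (simp add: cPP)
      then show "f \<in> {f \<in> up (Zr p). \<forall>j<n. f j = 0}" using g mult_monom[OF p g(1)] by simp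
    qed
  next
    show "{f \<in> up (Zr p). \<forall>j<n. f j = 0} \<subseteq> In p n"
    proof
      fix f assume f: "f \<in> {f \<in> up (Zr p). \<forall>j<n. f j = 0}"
      define g where "g i = f (i + n)" for i
      obtain N where N: "\<And>i. N < i \<Longrightarrow> f i = 0" using up_bound f by blast
      have gup: "g \<in> up (Zr p)"
      proof
        fix i show "g i \<in> carrier (Zr p)" using f unfolding g_def by auto
      next
        have "bound \<zero>\<^bsub>Zr p\<^esub> N g" using N by (auto simp: g_def Zr_simps)
        then show "\<exists>N. bound \<zero>\<^bsub>Zr p\<^esub> N g" by blast
      qed
      have "g \<otimes>\<^bsub>PP p\<^esub> monom (PP p) 1 n = f"
        using mult_monom[OF p gup] f unfolding g_def by (auto simp: fun_eq_iff)
      then show "f \<in> In p n" using gup unfolding In_def cgenideal_def cPP by blast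
    qed
  qed
qed

lemma In_ideal: "1 < p \<Longrightarrow> ideal (In p n) (PP p)"
proof -
  assume p: "1 < p"
  interpret P: UP_cring "Zr p" "PP p" by (rule PP_cring[OF p])
  have mc: "monom (PP p) 1 n \<in> carrier (PP p)" using P.monom_closed[of 1 n] p by (simp add: Zr_simps)
  show ?thesis unfolding In_def by (rule P.cgenideal_ideal[OF mc])
qed

lemma trunc_eq: "Fp_trunc p n = PP p Quot In p n"
  by (simp add: Fp_trunc_def Fp_poly_def In_def)

lemma H_hom: "1 < p \<Longrightarrow> ring_hom_ring (PP p) (Fp_trunc p n) (a_r_coset (PP p) (In p n))"
  unfolding trunc_eq by (rule ideal.rcos_ring_hom_ring[OF In_ideal])

lemma H_ker:
  assumes "1 < p" "f \<in> carrier (PP p)"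
  shows "(a_r_coset (PP p) (In p n) f = \<zero>\<^bsub>Fp_trunc p n\<^esub>) \<longleftrightarrow> (\<forall>j<n. f j = 0)"
  unfolding trunc_eq quot_zero using quot_eq_zero[OF In_ideal[OF assms(1)] assms(2)] In_char[OF assms(1)] assms(2)
  by (simp add: cPP)

lemma H_surj:
  "Y \<in> carrier (Fp_trunc p n) \<Longrightarrow> \<exists>d\<in>carrier (PP p). a_r_coset (PP p) (In p n) d = Y"
  unfolding trunc_eq quot_carrier by blast

definition It :: "nat \<Rightarrow> (rat \<Rightarrow> int) set" where
  "It p = PIdl\<^bsub>Fp_tinf p\<^esub> tvar_inf"

lemma It_ideal: "1 < p \<Longrightarrow> ideal (It p) (Fp_tinf p)"
  unfolding It_def
  by (rule cring.cgenideal_ideal[OF tinf_cring]) (auto simp: tvar_carrier Fp_tinf_def)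

lemma Q_eq: "Fp_tinf_mod_t p = Fp_tinf p Quot It p"
  by (simp add: Fp_tinf_mod_t_def It_def)

definition Gm :: "nat \<Rightarrow> rat \<Rightarrow> (nat \<Rightarrow> int) \<Rightarrow> (rat \<Rightarrow> int) set" where
  "Gm p a f = a_r_coset (Fp_tinf p) (It p) (Emap a f)"

lemma G_hom:
  assumes a: "0 < a" and p: "1 < p"
  shows "ring_hom_ring (PP p) (Fp_tinf_mod_t p) (Gm p a)"
proof -
  interpret P: UP_cring "Zr p" "PP p" by (rule PP_cring[OF p])
  have "Gm p a = a_r_coset (Fp_tinf p) (It p) \<circ> Emap a" by (simp add: Gm_def fun_eq_iff)
  then have "Gm p a \<in> ring_hom (PP p) (Fp_tinf_mod_t p)"
    using ring_hom_trans[OF Emap_hom[OF a p] ideal.rcos_ring_hom[OF It_ideal[OF p]]] by (simp add: Q_eq)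
  then show ?thesis
    using ideal.quotient_is_ring[OF It_ideal[OF p]] P.ring_axioms by (intro ring_hom_ringI2) (auto simp: Q_eq)
qed

lemma G_ker:
  assumes a: "0 < a" and p: "1 < p" and f: "f \<in> carrier (PP p)"
  shows "(Gm p a f = \<zero>\<^bsub>Fp_tinf_mod_t p\<^esub>) \<longleftrightarrow> (\<forall>j. of_nat j * a < 1 \<longrightarrow> f j = 0)"
proof -
  have ec: "Emap a f \<in> carrier (Fp_tinf p)" using Emap_carrier[OF a] f by (simp add: cPP Fp_tinf_def)
  have "(Gm p a f = \<zero>\<^bsub>Fp_tinf_mod_t p\<^esub>) \<longleftrightarrow> Emap a f \<in> It p"
    unfolding Q_eq quot_zero Gm_def using quot_eq_zero[OF It_ideal[OF p] ec] .
  also have "\<dots> \<longleftrightarrow> (\<forall>q<1. Emap a f q = 0)"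
    using ec It_char[OF p] by (simp add: It_def Fp_tinf_def)
  also have "\<dots> \<longleftrightarrow> (\<forall>j. of_nat j * a < 1 \<longrightarrow> f j = 0)"
  proof
    assume "\<forall>q<1. Emap a f q = 0" then show "\<forall>j. of_nat j * a < 1 \<longrightarrow> f j = 0"
      using Emap_at[OF a] by metis
  next
    assume h: "\<forall>j. of_nat j * a < 1 \<longrightarrow> f j = 0"
    show "\<forall>q<1. Emap a f q = 0"
    proof (intro allI impI)
      fix q :: rat assume q: "q < 1"
      show "Emap a f q = 0"
      proof (cases "\<exists>j::nat. q = of_nat j * a")
        case True
        then obtain j::nat where "q = of_nat j * a" by blast
        then show ?thesis using h q Emap_at[OF a] by simp
      qed (simp add: Emap_off)
    qed
  qed
  finally show ?thesis .
qed

lemma Q_cover: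
  assumes p: "1 < p" and Y: "Y \<in> carrier (Fp_tinf_mod_t p)"
  shows "\<exists>M>0. \<exists>f\<in>carrier (PP p). Y = Gm p (1 / of_nat M) f"
proof -
  obtain x where x: "x \<in> carrier (Fp_tinf p)" "Y = a_r_coset (Fp_tinf p) (It p) x"
    using Y unfolding Q_eq quot_carrier by blast
  have "x \<in> tinf_carrier p" using x(1) by (simp add: Fp_tinf_def)
  then obtain M f where "M > 0" "f \<in> up (Zr p)" "x = Emap (1 / of_nat M) f"
    using cover[OF _ p] by blast
  then show ?thesis using x by (auto simp: Gm_def cPP)
qed


lemma step:
  assumes g: "ring_hom_ring C A g" and h: "ring_hom_ring C B h"
    and ker: "\<forall>x\<in>carrier C. (g x = \<zero>\<^bsub>A\<^esub>) = (h x = \<zero>\<^bsub>B\<^esub>)"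
    and lift: "\<forall>a\<in>SA. \<exists>c\<in>carrier C. g c = a \<and> h c \<in> SB"
    and f: "existential f" and s: "satS A SA (\<lambda>_. \<zero>\<^bsub>A\<^esub>) f"
  shows "satS B SB (\<lambda>_. \<zero>\<^bsub>B\<^esub>) f"
proof -
  interpret G: ring_hom_ring C A g by fact
  interpret H: ring_hom_ring C B h by fact
  have r: "range (\<lambda>_. \<zero>\<^bsub>C\<^esub>) \<subseteq> carrier C" by auto
  have "satS B SB (\<lambda>i. h ((\<lambda>_. \<zero>\<^bsub>C\<^esub>) i)) f"
    by (rule exist_transfer[OF g h ker lift f r]) (use s in simp)
  then show ?thesis by simp
qed

lemma grid_lt: "0 < n \<Longrightarrow> (of_nat j * (1 / of_nat n) < (1::rat)) \<longleftrightarrow> j < n"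
  by (simp add: field_simps)

lemma grid_lt2: "0 < n \<Longrightarrow> (of_nat j * (of_nat k / of_nat n) < (1::rat)) \<longleftrightarrow> j * k < n"
proof -
  assume n: "0 < n"
  have "(of_nat j * (of_nat k / of_nat n) < (1::rat)) \<longleftrightarrow> of_nat (j * k) < (of_nat n :: rat)"
    using n by (simp add: field_simps)
  then show ?thesis by (simp only: of_nat_less_iff)
qed

lemma ceil_arith:
  fixes M n :: nat
  assumes M: "0 < M" and n: "M * M < n"
  defines "k \<equiv> (n + M - 1) div M"
  shows "0 < k" "\<And>j. j < M \<longleftrightarrow> j * k < n"
proof -
  have dm: "k * M + (n + M - 1) mod M = n + M - 1" unfolding k_def by (rule div_mult_mod_eq)
  have "(n + M - 1) mod M < M" using M by simp
  then have kM: "k * M \<le> n + M - 1" and kM2: "n + M - 1 < k * M + M" using dm by linarith+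
  have kn: "n \<le> k * M" using kM2 M by linarith
  show "0 < k" using kn n by (cases k) auto
  fix j
  show "j < M \<longleftrightarrow> j * k < n"
  proof
    assume j: "j < M"
    have "j * k \<le> (M - 1) * k" using j by (intro mult_right_mono) auto
    moreover have "(M - 1) * k < n"
    proof -
      have "(M - 1) * k * M = (M - 1) * (k * M)" by (simp add: algebra_simps)
      also have "\<dots> \<le> (M - 1) * (n + M - 1)" using kM by (intro mult_left_mono) auto
      also have "\<dots> < n * M"
      proof -
        have "n + M - 1 = n + (M - 1)" using M by simp
        then have "(M - 1) * (n + M - 1) = (M - 1) * n + (M - 1) * (M - 1)" by (simp add: distrib_left)
        also have "(M - 1) * (M - 1) < n" using n M by (metis diff_less le_less_trans less_one mult_le_mono nat_less_le
              mult_le_mono1 mult_le_mono2 order.strict_trans1 le_refl zero_less_one)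
        then have "(M - 1) * n + (M - 1) * (M - 1) < (M - 1) * n + n" by simp
        also have "\<dots> = n * M" using M by (cases M) (auto simp: algebra_simps)
        finally show ?thesis .
      qed
      finally show ?thesis using M by (metis mult_less_cancel2)
    qed
    ultimately show "j * k < n" by linarith
  next
    assume "j * k < n"
    then show "j < M" using kn by (metis mult.commute mult_le_mono2 not_less order.strict_trans2)
  qed
qed

lemma dir1:
  assumes p: "1 < p" and n: "0 < n" and f: "existential f" "sentence f"
    and m: "models (Fp_trunc p n) f"
  shows "models (Fp_tinf_mod_t p) f"
proof -
  have an: "(0::rat) < 1 / of_nat n" using n by simp
  note H = H_hom[OF p, of n] and G = G_hom[OF an p]
  have rT: "ring (Fp_trunc p n)" using H ring_hom_ring.axioms(2) by blast
  have rQ: "ring (Fp_tinf_mod_t p)" using G ring_hom_ring.axioms(2) by blast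
  have "sat (Fp_trunc p n) (\<lambda>_. \<zero>\<^bsub>Fp_trunc p n\<^esub>) f" using m models_iff_sat[OF f(2) rT] by simp
  then have s: "satS (Fp_trunc p n) (carrier (Fp_trunc p n)) (\<lambda>_. \<zero>\<^bsub>Fp_trunc p n\<^esub>) f"
    using sat_satS[OF f(1)] by metis
  have ker: "\<forall>x\<in>carrier (PP p). (a_r_coset (PP p) (In p n) x = \<zero>\<^bsub>Fp_trunc p n\<^esub>) =
      (Gm p (1 / of_nat n) x = \<zero>\<^bsub>Fp_tinf_mod_t p\<^esub>)"
    using H_ker[OF p] G_ker[OF an p] grid_lt[OF n] by simp
  have lift: "\<forall>a\<in>carrier (Fp_trunc p n). \<exists>c\<in>carrier (PP p). a_r_coset (PP p) (In p n) c = a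
      \<and> Gm p (1 / of_nat n) c \<in> carrier (Fp_tinf_mod_t p)"
    using H_surj ring_hom_ring.homh[OF G] ring_hom_closed by metis
  have "satS (Fp_tinf_mod_t p) (carrier (Fp_tinf_mod_t p)) (\<lambda>_. \<zero>\<^bsub>Fp_tinf_mod_t p\<^esub>) f"
    by (rule step[OF H G ker lift f(1) s])
  then have "sat (Fp_tinf_mod_t p) (\<lambda>_. \<zero>\<^bsub>Fp_tinf_mod_t p\<^esub>) f" using sat_satS[OF f(1)] by metis
  then show ?thesis using models_iff_sat[OF f(2) rQ] by simp
qed

lemma dir2:
  assumes p: "1 < p" and f: "existential f" "sentence f"
    and m: "models (Fp_tinf_mod_t p) f"
  shows "\<exists>M>0. \<forall>n. M * M < n \<longrightarrow> models (Fp_trunc p n) f"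
proof -
  define Q where "Q = Fp_tinf_mod_t p"
  have rQ: "ring Q" using G_hom[OF _ p, of 1] ring_hom_ring.axioms(2) unfolding Q_def by fastforce
  have sQ: "sat Q (\<lambda>_. \<zero>\<^bsub>Q\<^esub>) f" using m models_iff_sat[OF f(2) rQ] Q_def by simp
  define S where "S M = Gm p (1 / of_nat M) ` carrier (PP p)" for M
  have cov: "\<forall>a\<in>carrier Q. \<exists>M>0. a \<in> S M" using Q_cover[OF p] unfolding S_def Q_def by blast
  have dir: "S M \<subseteq> S (M * N)" if MN: "0 < M" "0 < N" for M N
  proof
    fix a assume "a \<in> S M"
    then obtain c where c: "c \<in> carrier (PP p)" "a = Gm p (1 / of_nat M) c" unfolding S_def by blast
    obtain c' where "c' \<in> up (Zr p)" "Emap (1 / of_nat M) c = Emap (1 / of_nat (M * N)) c'"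
      using refine[OF c(1)[unfolded cPP] MN(1) MN(2) p] by blast
    then show "a \<in> S (M * N)" using c unfolding S_def Gm_def by (auto simp: cPP)
  qed
  obtain M where M: "M > 0" "satS Q (S M) (\<lambda>_. \<zero>\<^bsub>Q\<^esub>) f"
    using exist_directed[of Q S, OF cov dir f(1) sQ] by blast
  have "models (Fp_trunc p n) f" if n: "M * M < n" for n
  proof -
    define k where "k = (n + M - 1) div M"
    have n0: "0 < n" using n by simp
    have k0: "0 < k" and kk: "\<And>j. j < M \<longleftrightarrow> j * k < n" using ceil_arith[OF M(1) n] k_def by auto
    have aM: "(0::rat) < 1 / of_nat M" using M by simp
    have ak: "(0::rat) < of_nat k / of_nat n" using k0 n0 by simp
    have an: "(0::rat) < 1 / of_nat n" using n0 by simp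
    define S' where "S' = Gm p (of_nat k / of_nat n) ` carrier (PP p)"
    define S'' where "S'' = Gm p (1 / of_nat n) ` carrier (PP p)"
    have ker1: "\<forall>c\<in>carrier (PP p). (Gm p (1 / of_nat M) c = \<zero>\<^bsub>Q\<^esub>) = (Gm p (of_nat k / of_nat n) c = \<zero>\<^bsub>Q\<^esub>)"
      using G_ker[OF aM p] G_ker[OF ak p] grid_lt[OF M(1)] grid_lt2[OF n0] kk unfolding Q_def by simp
    have s1: "satS Q S' (\<lambda>_. \<zero>\<^bsub>Q\<^esub>) f"
    proof (rule step[OF G_hom[OF aM p, folded Q_def] G_hom[OF ak p, folded Q_def] ker1 _ f(1) M(2)])
      show "\<forall>a\<in>S M. \<exists>c\<in>carrier (PP p). Gm p (1 / of_nat M) c = a \<and> Gm p (of_nat k / of_nat n) c \<in> S'"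
        unfolding S_def S'_def by blast
    qed
    have "S' \<subseteq> S''"
    proof
      fix a assume "a \<in> S'"
      then obtain c where c: "c \<in> carrier (PP p)" "a = Gm p (of_nat k / of_nat n) c" unfolding S'_def by blast
      have "Emap (of_nat k / of_nat n) c = Emap (of_nat k * (1 / of_nat n)) c" by simp
      also have "\<dots> = Emap (1 / of_nat n) (spread k c)" using Emap_spread[OF an k0] .
      finally show "a \<in> S''" using c spread_up[of c p k] k0 p unfolding S''_def Gm_def by (auto simp: cPP)
    qed
    then have s2: "satS Q S'' (\<lambda>_. \<zero>\<^bsub>Q\<^esub>) f" using satS_mono s1 by blast
    have ker3: "\<forall>c\<in>carrier (PP p). (Gm p (1 / of_nat n) c = \<zero>\<^bsub>Q\<^esub>) =
        (a_r_coset (PP p) (In p n) c = \<zero>\<^bsub>Fp_trunc p n\<^esub>)"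
      using H_ker[OF p] G_ker[OF an p] grid_lt[OF n0] unfolding Q_def by simp
    have lift3: "\<forall>a\<in>S''. \<exists>c\<in>carrier (PP p). Gm p (1 / of_nat n) c = a
      \<and> a_r_coset (PP p) (In p n) c \<in> carrier (Fp_trunc p n)"
    proof
      fix a assume "a \<in> S''"
      then obtain c where c: "c \<in> carrier (PP p)" "a = Gm p (1 / of_nat n) c" unfolding S''_def by blast
      have "a_r_coset (PP p) (In p n) c \<in> carrier (Fp_trunc p n)"
        using ring_hom_closed[OF ring_hom_ring.homh[OF H_hom[OF p, of n]] c(1)] .
      then show "\<exists>c\<in>carrier (PP p). Gm p (1 / of_nat n) c = a
      \<and> a_r_coset (PP p) (In p n) c \<in> carrier (Fp_trunc p n)" using c by blast
    qed
    have s3: "satS (Fp_trunc p n) (carrier (Fp_trunc p n)) (\<lambda>_. \<zero>\<^bsub>Fp_trunc p n\<^esub>) f"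
      by (rule step[OF G_hom[OF an p, folded Q_def] H_hom[OF p] ker3 lift3 f(1) s2])
    have rT: "ring (Fp_trunc p n)" using H_hom[OF p, of n] ring_hom_ring.axioms(2) by blast
    show ?thesis using s3 sat_satS[OF f(1)] models_iff_sat[OF f(2) rT] by metis
  qed
  then show ?thesis using M(1) by blast
qed

theorem mainTheorem13:
  fixes p :: nat
  assumes "Factorial_Ring.prime p"
  shows "asymp_exist_theory (Fp_trunc p) = exist_theory (Fp_tinf_mod_t p)"
proof -
  have p: "1 < p" using assms prime_gt_1_nat by blast
  show ?thesis
  proof (intro equalityI subsetI)
    fix f assume "f \<in> asymp_exist_theory (Fp_trunc p)"
    then have f: "sentence f" "existential f" and fin: "finite {n. \<not> models (Fp_trunc p n) f}"
      by (auto simp: asymp_exist_theory_def)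
    obtain b where b: "\<forall>x\<in>{n. \<not> models (Fp_trunc p n) f}. x \<le> b"
      using fin unfolding finite_nat_set_iff_bounded_le by blast
    have "models (Fp_trunc p (Suc b)) f" using b by force
    then have "models (Fp_tinf_mod_t p) f" using dir1[OF p zero_less_Suc f(2) f(1)] by blast
    then show "f \<in> exist_theory (Fp_tinf_mod_t p)" using f by (simp add: exist_theory_def)
  next
    fix f assume "f \<in> exist_theory (Fp_tinf_mod_t p)"
    then have f: "sentence f" "existential f" and m: "models (Fp_tinf_mod_t p) f"
      by (auto simp: exist_theory_def)
    obtain M where M: "\<forall>n. M * M < n \<longrightarrow> models (Fp_trunc p n) f" using dir2[OF p f(2) f(1) m] by blast
    have "{n. \<not> models (Fp_trunc p n) f} \<subseteq> {..M * M}" using M by (auto simp: not_less[symmetric])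
    then have "finite {n. \<not> models (Fp_trunc p n) f}" using finite_subset by blast
    then show "f \<in> asymp_exist_theory (Fp_trunc p)" using f by (simp add: asymp_exist_theory_def)
  qed
qed


end
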